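(* Let $n,k$ be integers with $2\le k<n$. Then $$\overline{\mathrm{dist}}_F(\mathcal{S}^{n,k},\mathcal{S}^n_+)\ge \frac{n-k}{\sqrt{(k-1)^2 n+n(n-1)}}.$$
   Context: $\mathcal{S}^n_+$ denotes the cone of $n\times n$ real symmetric positive semidefinite (PSD) matrices. For integers $2\le k\le n$, the $k$-PSD closure $\mathcal{S}^{n,k}$ is the set of all $n\times n$ real symmetric matrices all of whose $k\times k$ principal submatrices are PSD. For a matrix $M$, $\mathrm{dist}_F(M,\mathcal{S}^n_+)=\inf_{N\in\mathcal{S}^n_+}\|M-N\|_F$, where $\|\cdot\|_F$ is the Frobenius norm. For a set $\mathcal{K}$ of $n\times n$ matrices, $\overline{\mathrm{dist}}_F(\mathcal{K},\mathcal{S}^n_+)=\sup_{M\in\mathcal{K},\ \|M\|_F=1}\mathrm{dist}_F(M,\mathcal{S}^n_+)$. *)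

theory Defs
  imports "HOL-Analysis.Analysis"
begin

text \<open>Real n x n matrices are rendered as real^'n^'n, with n = CARD('n).\<close>

definition symmetric_mat :: "real^'n^'n \<Rightarrow> bool" where
  "symmetric_mat M \<longleftrightarrow> transpose M = M"

definition psd_cone :: "(real^'n^'n) set" where
  "psd_cone = {M. symmetric_mat M \<and> (\<forall>x::real^'n. 0 \<le> x \<bullet> (M *v x))}"

text \<open>The principal submatrix of M indexed by I (viewed as a matrix indexed by I x I)
  is PSD: its quadratic form is nonnegative on all vectors indexed by I
  (symmetry is inherited from M).\<close>
definition principal_submatrix_psd :: "real^'n^'n \<Rightarrow> 'n set \<Rightarrow> bool" where
  "principal_submatrix_psd M I \<longleftrightarrow>
     (\<forall>y::'n \<Rightarrow> real. 0 \<le> (\<Sum>i\<in>I. \<Sum>j\<in>I. y i * (M $ i $ j) * y j))"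

definition kpsd_closure :: "nat \<Rightarrow> (real^'n^'n) set" where
  "kpsd_closure k = {M. symmetric_mat M \<and>
     (\<forall>I::'n set. card I = k \<longrightarrow> principal_submatrix_psd M I)}"

definition frob_norm :: "real^'n^'n \<Rightarrow> real" where
  "frob_norm M = sqrt (\<Sum>i\<in>UNIV. \<Sum>j\<in>UNIV. (M $ i $ j)\<^sup>2)"

definition distF :: "real^'n^'n \<Rightarrow> (real^'n^'n) set \<Rightarrow> real" where
  "distF M S = (INF N\<in>S. frob_norm (M - N))"

definition distF_bar :: "(real^'n^'n) set \<Rightarrow> (real^'n^'n) set \<Rightarrow> real" where
  "distF_bar K S = (SUP M\<in>{M\<in>K. frob_norm M = 1}. distF M S)"

end

theory Submission
  imports Defs
begin

lemma frob_nonneg: "0 \<le> frob_norm A"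
  unfolding frob_norm_def by (simp add: sum_nonneg)

lemma frob_sym: "frob_norm (A - B) = frob_norm (B - A)"
  unfolding frob_norm_def by (simp add: power2_commute)

lemma sum_le_frob:
  fixes A :: "real^'n^'n"
  shows "(\<Sum>i\<in>UNIV. \<Sum>j\<in>UNIV. A $ i $ j) \<le> real CARD('n) * frob_norm A"
proof -
  let ?s = "\<Sum>i\<in>UNIV. \<Sum>j\<in>UNIV. A $ i $ j"
  let ?q = "\<Sum>i\<in>UNIV. \<Sum>j\<in>UNIV. (A $ i $ j)\<^sup>2"
  have e1: "?s = (\<Sum>p\<in>UNIV \<times> UNIV. A $ fst p $ snd p)"
    by (simp add: sum.cartesian_product split_def)
  have e2: "?q = (\<Sum>p\<in>UNIV \<times> UNIV. (A $ fst p $ snd p)\<^sup>2)"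
    by (simp add: sum.cartesian_product split_def)
  have "?s\<^sup>2 \<le> ?q * card ((UNIV::'n set) \<times> (UNIV::'n set))"
    unfolding e1 e2 by (rule sum_squared_le_sum_of_squares[of "\<lambda>p. A $ fst p $ snd p"])
  also have "card ((UNIV::'n set) \<times> (UNIV::'n set)) = (real CARD('n))\<^sup>2"
    by (simp add: card_cartesian_product power2_eq_square)
  finally have "?s\<^sup>2 \<le> ?q * (real CARD('n))\<^sup>2" .
  hence "sqrt (?s\<^sup>2) \<le> sqrt (?q * (real CARD('n))\<^sup>2)" by (rule real_sqrt_le_mono)
  hence "\<bar>?s\<bar> \<le> sqrt ?q * real CARD('n)" by (simp add: real_sqrt_mult)
  thus ?thesis unfolding frob_norm_def by (simp add: mult.commute)
qed

lemma psd_sum_nonneg: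
  fixes N :: "real^'n^'n"
  assumes "N \<in> psd_cone"
  shows "0 \<le> (\<Sum>i\<in>UNIV. \<Sum>j\<in>UNIV. N $ i $ j)"
proof -
  have "0 \<le> ((\<chi> i. 1)::real^'n) \<bullet> (N *v (\<chi> i. 1))"
    using assms unfolding psd_cone_def by blast
  thus ?thesis
    by (simp add: inner_vec_def matrix_vector_mult_def)
qed

lemma sum_if_eq:
  fixes a b :: real
  shows "(\<Sum>j\<in>(UNIV::'n::finite set). (if i = j then a else b)) = a + (real CARD('n) - 1) * b"
proof -
  have "(\<Sum>j\<in>(UNIV::'n set). (if i = j then a else b)) = (\<Sum>j\<in>(UNIV::'n set). b + (if i = j then a - b else 0))"
    by (rule sum.cong) auto
  also have "\<dots> = real CARD('n) * b + (a - b)"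
    by (simp add: sum.distrib)
  finally show ?thesis by (simp add: algebra_simps)
qed

theorem theorem3:
  fixes k :: nat
  assumes "2 \<le> k" and "k < CARD('n::finite)"
  shows "distF_bar (kpsd_closure k :: (real^'n^'n) set) psd_cone
           \<ge> (real CARD('n) - real k) /
              sqrt ((real k - 1)\<^sup>2 * real CARD('n) + real CARD('n) * (real CARD('n) - 1))"
proof -
  define n where "n = real CARD('n)"
  define c where "c = sqrt ((real k - 1)\<^sup>2 * n + n * (n - 1))"
  have n1: "n \<ge> 3" using assms unfolding n_def by linarith
  have cpos: "c > 0" unfolding c_def using n1
    by (intro real_sqrt_gt_zero add_nonneg_pos) auto
  have c2: "c\<^sup>2 = (real k - 1)\<^sup>2 * n + n * (n - 1)"
    unfolding c_def using n1 by (intro real_sqrt_pow2) (auto intro!: add_nonneg_nonneg)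
  define M :: "real^'n^'n" where "M = (\<chi> i j. (if i = j then real k - 1 else -1) / c)"
  have sumM: "(\<Sum>i\<in>UNIV. \<Sum>j\<in>UNIV. M $ i $ j) = n * (real k - n) / c"
  proof -
    have "(\<Sum>i\<in>UNIV. \<Sum>j\<in>UNIV. M $ i $ j) = (\<Sum>i\<in>(UNIV::'n set). (\<Sum>j\<in>UNIV. (if i = j then real k - 1 else -1)) / c)"
      unfolding M_def by (simp add: sum_divide_distrib)
    also have "\<dots> = (\<Sum>i\<in>(UNIV::'n set). (real k - n) / c)"
      by (simp add: sum_if_eq n_def)
    also have "\<dots> = n * (real k - n) / c" by (simp add: n_def)
    finally show ?thesis .
  qed
  have frobM: "frob_norm M = 1"
  proof -
    have "(\<Sum>i\<in>UNIV. \<Sum>j\<in>UNIV. (M $ i $ j)\<^sup>2) = (\<Sum>i\<in>(UNIV::'n set). (\<Sum>j\<in>UNIV. (if i = j then (real k - 1)\<^sup>2 else 1)) / c\<^sup>2)"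
      unfolding M_def by (simp add: sum_divide_distrib power_divide if_distrib[of "\<lambda>x. x\<^sup>2"] cong: if_cong)
    also have "\<dots> = (\<Sum>i\<in>(UNIV::'n set). ((real k - 1)\<^sup>2 + (n - 1)) / c\<^sup>2)"
      by (simp add: sum_if_eq n_def)
    also have "\<dots> = 1" using c2 cpos by (simp add: n_def algebra_simps)
    finally show ?thesis unfolding frob_norm_def by simp
  qed
  have Mk: "M \<in> kpsd_closure k"
    unfolding kpsd_closure_def
  proof (intro CollectI conjI allI impI)
    show "symmetric_mat M" unfolding symmetric_mat_def M_def
      by (simp add: vec_eq_iff transpose_def)
    fix I :: "'n set" assume cI: "card I = k"
    show "principal_submatrix_psd M I" unfolding principal_submatrix_psd_def
    proof
      fix y :: "'n \<Rightarrow> real"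
      have fin: "finite I" by simp
      have "(\<Sum>i\<in>I. \<Sum>j\<in>I. y i * (M $ i $ j) * y j)
          = (\<Sum>i\<in>I. \<Sum>j\<in>I. (real k / c) * (if i = j then y i * y j else 0) - (1/c) * (y i * y j))"
        unfolding M_def using cpos by (intro sum.cong refl) (auto simp: field_simps)
      also have "\<dots> = (real k / c) * (\<Sum>i\<in>I. (y i)\<^sup>2) - (1/c) * (\<Sum>i\<in>I. y i)\<^sup>2"
      proof -
        have a: "(\<Sum>i\<in>I. \<Sum>j\<in>I. (if i = j then y i * y j else 0)) = (\<Sum>i\<in>I. (y i)\<^sup>2)"
          by (simp add: power2_eq_square)
        have b: "(\<Sum>i\<in>I. \<Sum>j\<in>I. y i * y j) = (\<Sum>i\<in>I. y i)\<^sup>2"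
          by (simp add: power2_eq_square sum_product)
        have b2: "(\<Sum>i\<in>I. y i * sum y I) = (sum y I)\<^sup>2"
          by (simp add: power2_eq_square sum_distrib_right)
        show ?thesis
          by (simp only: sum_subtractf sum_distrib_left[symmetric] a b b2)
      qed
      also have "\<dots> = (real (card I) * (\<Sum>i\<in>I. (y i)\<^sup>2) - (\<Sum>i\<in>I. y i)\<^sup>2) / c"
        using cI cpos by (simp add: field_simps)
      finally have eq: "(\<Sum>i\<in>I. \<Sum>j\<in>I. y i * (M $ i $ j) * y j) = (real (card I) * (\<Sum>i\<in>I. (y i)\<^sup>2) - (\<Sum>i\<in>I. y i)\<^sup>2) / c" .
      have "(\<Sum>i\<in>I. y i)\<^sup>2 \<le> (\<Sum>i\<in>I. (y i)\<^sup>2) * card I" by (rule sum_squared_le_sum_of_squares)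
      thus "0 \<le> (\<Sum>i\<in>I. \<Sum>j\<in>I. y i * (M $ i $ j) * y j)"
        unfolding eq using cpos by (simp add: mult.commute)
    qed
  qed
  have zpsd: "0 \<in> psd_cone"
    unfolding psd_cone_def symmetric_mat_def by (simp add: vec_eq_iff transpose_def)
  have distlow: "(n - real k) / c \<le> distF M psd_cone"
    unfolding distF_def
  proof (rule cINF_greatest)
    show "psd_cone \<noteq> {}" using zpsd by blast
    fix N :: "real^'n^'n" assume N: "N \<in> psd_cone"
    have "(\<Sum>i\<in>UNIV. \<Sum>j\<in>UNIV. (N - M) $ i $ j) = (\<Sum>i\<in>UNIV. \<Sum>j\<in>UNIV. N $ i $ j) - (\<Sum>i\<in>UNIV. \<Sum>j\<in>UNIV. M $ i $ j)"
      by (simp add: sum_subtractf)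
    moreover have "- (n * (real k - n) / c) = n * (n - real k) / c" using cpos by (simp add: field_simps)
    ultimately have "n * (n - real k) / c \<le> n * frob_norm (N - M)"
      using sum_le_frob[of "N - M"] psd_sum_nonneg[OF N] sumM unfolding n_def
      by linarith
    hence "n * ((n - real k) / c) \<le> n * frob_norm (N - M)" by simp
    hence "(n - real k) / c \<le> frob_norm (N - M)" using n1
      by (subst (asm) mult_le_cancel_left_pos) auto
    thus "(n - real k) / c \<le> frob_norm (M - N)" by (simp add: frob_sym)
  qed
  have bdd: "bdd_above ((\<lambda>M. distF M psd_cone) ` {M\<in>(kpsd_closure k :: (real^'n^'n) set). frob_norm M = 1})"
  proof (rule bdd_aboveI2)
    fix A :: "real^'n^'n" assume A: "A \<in> {M\<in>kpsd_closure k. frob_norm M = 1}"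
    have "distF A psd_cone \<le> frob_norm (A - 0)"
      unfolding distF_def
      by (rule cINF_lower[OF _ zpsd]) (auto intro: bdd_belowI2 frob_nonneg)
    thus "distF A psd_cone \<le> 1" using A by simp
  qed
  have "distF M psd_cone \<le> distF_bar (kpsd_closure k :: (real^'n^'n) set) psd_cone"
    unfolding distF_bar_def
    by (rule cSUP_upper[OF _ bdd]) (use Mk frobM in auto)
  thus ?thesis using distlow unfolding n_def c_def by simp
qed

end
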